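(* $\mathrm{EquSLP}\leq_{\mathrm{P}}\mathrm{3SoSSLP}$ (polynomial-time many-one reduction).
   Context: A (division-free, constant-free) SLP computing an integer is a sequence $(b_0,\dots,b_m)$ of integers with $b_0=1$ and $b_i=b_j\circ_i b_k$ for some $j,k<i$, $\circ_i\in\{+,-,\times\}$; it computes $b_m$. $\mathrm{EquSLP}$: given an SLP computing $N\in\mathbb{Z}$, decide whether $N=0$. $\mathrm{3SoSSLP}$: given an SLP computing $N\in\mathbb{Z}$, decide whether $N=a^2+b^2+c^2$ for some integers $a,b,c$. *)

theory Defs
  imports Main
begin

datatype slp_op = Add | Sub | Mul

(* Instruction i (0-based) of a program computes b_(i+1) = b_j op b_k *)
type_synonym slp_instr = "slp_op \<times> nat \<times> nat"

fun apply_op :: "slp_op \<Rightarrow> int \<Rightarrow> int \<Rightarrow> int" where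
  "apply_op Add x y = x + y"
| "apply_op Sub x y = x - y"
| "apply_op Mul x y = x * y"

definition wf_slp :: "slp_instr list \<Rightarrow> bool" where
  "wf_slp P \<longleftrightarrow> (\<forall>i<length P. fst (snd (P ! i)) \<le> i \<and> snd (snd (P ! i)) \<le> i)"

fun slp_step :: "int list \<Rightarrow> slp_instr \<Rightarrow> int list" where
  "slp_step vs (o', j, k) = vs @ [apply_op o' (vs ! j) (vs ! k)]"

(* the sequence b_0 = 1, b_1, ..., b_m *)
definition slp_values :: "slp_instr list \<Rightarrow> int list" where
  "slp_values P = foldl slp_step [1] P"

definition slp_value :: "slp_instr list \<Rightarrow> int" where
  "slp_value P = last (slp_values P)"

definition enc_nat :: "nat \<Rightarrow> bool list" where
  "enc_nat n = replicate n True @ [False]"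

fun enc_op :: "slp_op \<Rightarrow> bool list" where
  "enc_op Add = [False, False]"
| "enc_op Sub = [False, True]"
| "enc_op Mul = [True, False]"

fun enc_instr :: "slp_instr \<Rightarrow> bool list" where
  "enc_instr (o', j, k) = enc_op o' @ enc_nat j @ enc_nat k"

definition enc_slp :: "slp_instr list \<Rightarrow> bool list" where
  "enc_slp P = concat (map enc_instr P)"

definition EquSLP :: "bool list set" where
  "EquSLP = {enc_slp P | P. wf_slp P \<and> slp_value P = 0}"

definition ThreeSoSSLP :: "bool list set" where
  "ThreeSoSSLP = {enc_slp P | P. wf_slp P \<and>
      (\<exists>a b c :: int. slp_value P = a^2 + b^2 + c^2)}"

(* states 0..<tm_states, start state 0; tape symbols 0..<tm_symbols, 0 = blank,
   1 = bit False, 2 = bit True; delta q s = (q', s', move) with move in {-1,0,1} *)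
record tm =
  tm_states :: nat
  tm_symbols :: nat
  tm_delta :: "nat \<Rightarrow> nat \<Rightarrow> nat \<times> nat \<times> int"
  tm_halt :: nat

definition valid_tm :: "tm \<Rightarrow> bool" where
  "valid_tm M \<longleftrightarrow> 3 \<le> tm_symbols M \<and> tm_halt M < tm_states M \<and>
     (\<forall>q<tm_states M. \<forall>s<tm_symbols M.
        (case tm_delta M q s of (q', s', d) \<Rightarrow>
           q' < tm_states M \<and> s' < tm_symbols M \<and> d \<in> {-1, 0, 1}))"

type_synonym tm_config = "nat \<times> int \<times> (int \<Rightarrow> nat)"

definition tm_step :: "tm \<Rightarrow> tm_config \<Rightarrow> tm_config" where
  "tm_step M c = (case c of (q, h, t) \<Rightarrow>
     if q = tm_halt M then (q, h, t)
     else (case tm_delta M q (t h) of (q', s', d) \<Rightarrow> (q', h + d, t(h := s'))))"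

definition bit_sym :: "bool \<Rightarrow> nat" where
  "bit_sym b = (if b then 2 else 1)"

definition tm_init :: "bool list \<Rightarrow> tm_config" where
  "tm_init x = (0, 0, \<lambda>i. if 0 \<le> i \<and> i < int (length x) then bit_sym (x ! nat i) else 0)"

definition tape_holds :: "(int \<Rightarrow> nat) \<Rightarrow> bool list \<Rightarrow> bool" where
  "tape_holds t y \<longleftrightarrow> (\<forall>i<length y. t (int i) = bit_sym (y ! i)) \<and> t (int (length y)) = 0"

definition computes_within :: "tm \<Rightarrow> (bool list \<Rightarrow> bool list) \<Rightarrow> (nat \<Rightarrow> nat) \<Rightarrow> bool" where
  "computes_within M f T \<longleftrightarrow> (\<forall>x. \<exists>n \<le> T (length x).
     (case (tm_step M ^^ n) (tm_init x) of (q, h, t) \<Rightarrow> q = tm_halt M \<and> tape_holds t (f x)))"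

definition poly_time_computable :: "(bool list \<Rightarrow> bool list) \<Rightarrow> bool" where
  "poly_time_computable f \<longleftrightarrow>
     (\<exists>M c k. valid_tm M \<and> computes_within M f (\<lambda>n. c * n ^ k + c))"

definition poly_reduces :: "bool list set \<Rightarrow> bool list set \<Rightarrow> bool" (infix "\<le>\<^sub>P" 50) where
  "A \<le>\<^sub>P B \<longleftrightarrow> (\<exists>f. poly_time_computable f \<and> (\<forall>x. x \<in> A \<longleftrightarrow> f x \<in> B))"

end

theory Submission
  imports Defs
begin


fun vnext :: "nat \<Rightarrow> bool \<Rightarrow> nat option" where
  "vnext q b = (if q = 0 then Some (if b then 2 else 1)
     else if q = 1 then Some 3
     else if q = 2 then (if b then None else Some 3)
     else if q = 3 then Some (if b then 3 else 4)
     else if q = 4 then Some (if b then 4 else 0) else None)"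

fun vrun :: "nat \<Rightarrow> bool list \<Rightarrow> nat option" where
  "vrun q [] = Some q"
| "vrun q (b # bs) = (case vnext q b of None \<Rightarrow> None | Some q' \<Rightarrow> vrun q' bs)"

lemma vrun_append: "vrun q xs = Some q' \<Longrightarrow> vrun q (xs @ ys) = vrun q' ys"
  by (induction xs arbitrary: q) (auto split: option.splits)

lemma vrun_rep3: "vrun 3 (replicate j True) = Some 3"
  by (induction j) auto
lemma vrun_rep4: "vrun 4 (replicate j True) = Some 4"
  by (induction j) auto

lemma vrun_instr: "vrun 0 (enc_instr i @ r) = vrun 0 r"
proof -
  obtain o' j k where i: "i = (o', j, k)" by (cases i) auto
  have a: "vrun 0 (enc_op o') = Some 3" by (cases o') auto
  have b: "vrun 3 (enc_nat j) = Some 4"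
    using vrun_append[OF vrun_rep3, of j "[False]"] by (simp add: enc_nat_def)
  have c: "vrun 4 (enc_nat k) = Some 0"
    using vrun_append[OF vrun_rep4, of k "[False]"] by (simp add: enc_nat_def)
  show ?thesis using vrun_append[OF a] vrun_append[OF b] vrun_append[OF c] i
    by simp
qed

lemma vrun_enc: "vrun 0 (enc_slp P @ r) = vrun 0 r"
  by (induction P) (auto simp: enc_slp_def vrun_instr)

lemma vrun_enc0: "vrun 0 (enc_slp P) = Some 0"
  using vrun_enc[of P "[]"] by simp

lemma vrun_un:
  assumes "q = 3 \<or> q = 4" "vrun q y = Some 0"
  shows "\<exists>j r. y = enc_nat j @ r \<and> vrun (if q = 3 then 4 else 0) r = Some 0"
  using assms
proof (induction y)
  case Nil then show ?case by auto
next
  case (Cons b y)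
  show ?case
  proof (cases b)
    case True
    with Cons have "vrun q y = Some 0" by auto
    with Cons.IH Cons.prems obtain j r where "y = enc_nat j @ r" "vrun (if q = 3 then 4 else 0) r = Some 0" by blast
    then show ?thesis using True by (intro exI[of _ "Suc j"] exI[of _ r]) (auto simp: enc_nat_def)
  next
    case False
    then show ?thesis using Cons.prems by (intro exI[of _ 0] exI[of _ y]) (auto simp: enc_nat_def)
  qed
qed

lemma len_enc_instr: "length (enc_instr (o', j, k)) = j + k + 4"
  by (cases o') (auto simp: enc_nat_def)

lemma vrun_dec: "vrun 0 x = Some 0 \<Longrightarrow> \<exists>P. x = enc_slp P"
proof (induction "length x" arbitrary: x rule: less_induct)
  case less
  show ?case
  proof (cases x)
    case Nil then show ?thesis by (intro exI[of _ "[]"]) (simp add: enc_slp_def)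
  next
    case (Cons b1 x1)
    then obtain b2 x2 where x1: "x1 = b2 # x2" using less.prems
      by (cases x1) (auto split: if_splits)
    obtain o' where op: "enc_op o' = [b1, b2]" and v3: "vrun 3 x2 = Some 0"
      using less.prems Cons x1
      by (cases b1; cases b2) (auto split: if_splits intro: enc_op.simps)
    obtain j r where r: "x2 = enc_nat j @ r" "vrun 4 r = Some 0"
      using vrun_un[of 3 x2] v3 by auto
    obtain k r2 where r2: "r = enc_nat k @ r2" "vrun 0 r2 = Some 0"
      using vrun_un[of 4 r] r by auto
    have "length r2 < length x" using Cons x1 r r2 by simp
    then obtain P where "r2 = enc_slp P" using less r2 by blast
    then show ?thesis using Cons x1 r r2 op
      by (intro exI[of _ "(o', j, k) # P"]) (simp add: enc_slp_def)
  qed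
qed



lemma enc_nat_inj: "enc_nat j @ r = enc_nat j' @ r' \<Longrightarrow> j = j' \<and> r = r'"
proof (induction j arbitrary: j')
  case 0 then show ?case by (cases j') (auto simp: enc_nat_def)
next
  case (Suc j) then show ?case by (cases j') (auto simp: enc_nat_def)
qed

lemma enc_instr_inj: "enc_instr a @ r = enc_instr b @ r' \<Longrightarrow> a = b \<and> r = r'"
proof -
  assume h: "enc_instr a @ r = enc_instr b @ r'"
  obtain o1 j1 k1 where a: "a = (o1, j1, k1)" by (cases a) auto
  obtain o2 j2 k2 where b: "b = (o2, j2, k2)" by (cases b) auto
  have "o1 = o2 \<and> enc_nat j1 @ enc_nat k1 @ r = enc_nat j2 @ enc_nat k2 @ r'"
    using h a b by (cases o1; cases o2) auto
  then show ?thesis using a b enc_nat_inj by blast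
qed

lemma enc_instr_ne: "enc_instr a \<noteq> []"
  by (cases a) (simp add: enc_nat_def)

lemma enc_slp_inj: "enc_slp P = enc_slp Q \<Longrightarrow> P = Q"
proof (induction P arbitrary: Q)
  case Nil then show ?case by (cases Q) (auto simp: enc_slp_def enc_instr_ne)
next
  case (Cons a P)
  then obtain b Q' where Q: "Q = b # Q'" by (cases Q) (auto simp: enc_slp_def enc_instr_ne)
  then show ?case using Cons enc_instr_inj[of a "enc_slp P" b "enc_slp Q'"] by (auto simp: enc_slp_def)
qed

lemma slp_values_len: "length (slp_values P) = length P + 1"
  unfolding slp_values_def
proof (induction P rule: rev_induct)
  case (snoc a P)
  obtain o' j k where "a = (o', j, k)" by (cases a) auto
  then show ?case using snoc by simp
qed simp

lemma slp_values_0: "slp_values P ! 0 = 1"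
  unfolding slp_values_def
proof (induction P rule: rev_induct)
  case Nil then show ?case by simp
next
  case (snoc a P)
  obtain o' j k where "a = (o', j, k)" by (cases a) auto
  moreover have "length (foldl slp_step [1] P) > 0"
    using slp_values_len[of P] unfolding slp_values_def by simp
  ultimately show ?case using snoc by (simp add: nth_append)
qed

definition sfx :: "nat \<Rightarrow> slp_instr list" where
  "sfx m = [(Mul, m, m), (Sub, 0, 0), (Sub, m + 2, m + 1)]"

lemma value_sfx: "slp_value (P @ sfx (length P)) = - ((slp_value P)^2)"
proof -
  define vs where "vs = slp_values P"
  have l: "length vs = length P + 1" using slp_values_len vs_def by simp
  have v0: "vs ! 0 = 1" using slp_values_0 vs_def by simp
  have lst: "last vs = vs ! length P" proof -
    have "vs \<noteq> []" using l by auto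
    then show ?thesis using l by (simp add: last_conv_nth)
  qed
  have "slp_values (P @ sfx (length P)) = foldl slp_step vs (sfx (length P))"
    by (simp add: slp_values_def vs_def)
  also have "\<dots> = vs @ [vs ! length P * vs ! length P, 0, - (vs ! length P * vs ! length P)]"
    using l v0 by (simp add: sfx_def nth_append)
  finally show ?thesis unfolding slp_value_def using lst vs_def
    by (simp add: power2_eq_square)
qed

lemma wf_sfx: "wf_slp (P @ sfx (length P)) \<longleftrightarrow> wf_slp P"
proof
  assume "wf_slp (P @ sfx (length P))"
  then show "wf_slp P" unfolding wf_slp_def
    by (metis length_append nth_append trans_less_add1)
next
  assume w: "wf_slp P"
  show "wf_slp (P @ sfx (length P))" unfolding wf_slp_def
  proof (intro allI impI)
    fix i assume i: "i < length (P @ sfx (length P))"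
    show "fst (snd ((P @ sfx (length P)) ! i)) \<le> i \<and> snd (snd ((P @ sfx (length P)) ! i)) \<le> i"
    proof (cases "i < length P")
      case True then show ?thesis using w by (simp add: wf_slp_def nth_append)
    next
      case False
      then have "i - length P < 3" using i by (simp add: sfx_def)
      then have "i - length P = 0 \<or> i - length P = 1 \<or> i - length P = 2" by auto
      then show ?thesis using False by (auto simp: nth_append sfx_def)
    qed
  qed
qed

lemma sos_neg: "(\<exists>a b c :: int. - (N^2) = a^2 + b^2 + c^2) \<longleftrightarrow> N = 0"
proof
  assume "\<exists>a b c :: int. - (N^2) = a^2 + b^2 + c^2"
  then obtain a b c :: int where h: "- (N^2) = a^2 + b^2 + c^2" by blast
  have "a^2 \<ge> 0" "b^2 \<ge> 0" "c^2 \<ge> 0" "N^2 \<ge> 0" by auto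
  then have "N^2 = 0" using h by linarith
  then show "N = 0" by simp
qed (intro exI[of _ 0], simp)

lemma enc_ne_TT: "enc_slp P \<noteq> True # True # r"
proof (cases P)
  case Nil then show ?thesis by (simp add: enc_slp_def)
next
  case (Cons a P')
  obtain o' j k where "a = (o', j, k)" by (cases a) auto
  then show ?thesis using Cons by (cases o') (auto simp: enc_slp_def)
qed

definition dec :: "bool list \<Rightarrow> slp_instr list" where
  "dec x = (SOME P. x = enc_slp P)"

definition fred :: "bool list \<Rightarrow> bool list" where
  "fred x = (if vrun 0 x = Some 0 then enc_slp (dec x @ sfx (length (dec x))) else [True, True])"

lemma fred_correct: "x \<in> EquSLP \<longleftrightarrow> fred x \<in> ThreeSoSSLP"
proof (cases "vrun 0 x = Some 0")
  case True
  then obtain P where x: "x = enc_slp P" using vrun_dec by blast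
  then have d: "dec x = P" unfolding dec_def using enc_slp_inj by (metis (mono_tags) someI_ex)
  have "x \<in> EquSLP \<longleftrightarrow> wf_slp P \<and> slp_value P = 0"
    unfolding EquSLP_def using x enc_slp_inj by blast
  moreover have "fred x \<in> ThreeSoSSLP \<longleftrightarrow> wf_slp (P @ sfx (length P)) \<and>
      (\<exists>a b c :: int. slp_value (P @ sfx (length P)) = a^2 + b^2 + c^2)"
  proof -
    have "fred x = enc_slp (P @ sfx (length P))" unfolding fred_def using True d by simp
    moreover have "enc_slp (P @ sfx (length P)) \<in> ThreeSoSSLP \<longleftrightarrow> wf_slp (P @ sfx (length P)) \<and>
      (\<exists>a b c :: int. slp_value (P @ sfx (length P)) = a^2 + b^2 + c^2)" (is "?L \<longleftrightarrow> ?R")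
    proof
      assume ?L
      then obtain Q where "enc_slp (P @ sfx (length P)) = enc_slp Q" "wf_slp Q"
        "\<exists>a b c :: int. slp_value Q = a^2 + b^2 + c^2" unfolding ThreeSoSSLP_def by blast
      then show ?R using enc_slp_inj by blast
    next
      assume ?R then show ?L unfolding ThreeSoSSLP_def by blast
    qed
    ultimately show ?thesis by simp
  qed
  ultimately show ?thesis using wf_sfx value_sfx sos_neg by simp
next
  case False
  then have "x \<notin> EquSLP" unfolding EquSLP_def using vrun_enc0 by auto
  moreover have "fred x \<notin> ThreeSoSSLP" unfolding ThreeSoSSLP_def fred_def using False
    by (auto simp: enc_ne_TT[symmetric])
  ultimately show ?thesis by simp
qed



definition tp :: "nat list \<Rightarrow> int \<Rightarrow> nat" where
  "tp w i = (if 0 \<le> i \<and> i < int (length w) then w ! nat i else 0)"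

definition cw :: "nat \<Rightarrow> nat list" where
 "cw c = (if c = 0 then [5,6] else if c = 1 then [6] else if c = 2 then [6,6,5,6,6,6,5,5,5]
    else if c = 3 then [6,5] else if c = 4 then [6] else [])"

definition ld :: "nat \<Rightarrow> nat \<Rightarrow> nat \<Rightarrow> nat \<times> nat \<times> int" where
"ld p r s = (if r = 0 then (if s = 1 then (10*p+1, 3, 1) else if s = 2 then (10*p+1, 4, 1) else (10*p+6, s, 0))
  else if r = 1 then (if s = 0 then (10*p+2, 5, -1) else (10*p+1, s, 1))
  else if r = 2 then (if s = 3 then (10*p+3, 1, 1) else if s = 4 then (10*p+3, 2, 1) else (10*p+2, s, -1))
  else if r = 3 then (10*p+4, s, 1)
  else if r = 4 then (if s = 2 then (10*p+4, 2, 1) else (10*p+5, s, 1))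
  else if r = 5 then (if s = 2 then (10*p+5, 2, 1) else (10*p, s, 1))
  else if r = 6 then (if s = 0 then (100 + 20*p, 0, 0) else (10*p+6, s, 1))
  else if r = 7 then (if s = 0 then (10*p, 0, 1) else (10*p+7, s, -1))
  else (200, s, 0))"

definition cd :: "nat \<Rightarrow> nat \<Rightarrow> nat \<Rightarrow> nat \<times> nat \<times> int" where
"cd c i s = (if c \<le> 4 \<and> i < length (cw c) then (100 + 20*c + i + 1, cw c ! i, 1)
   else if c \<le> 4 \<and> i = length (cw c) then (if c < 4 then 10*(c+1)+7 else 9, s, -1)
   else (200, s, 0))"

definition dl :: "nat \<Rightarrow> nat \<Rightarrow> nat \<times> nat \<times> int" where
"dl q s = (if q = 0 then (if s = 1 then (1,1,1) else if s = 2 then (2,2,1) else if s = 0 then (100,0,0) else (200,s,0))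
 else if q = 1 then (if s = 0 then (5,0,-1) else (3,s,1))
 else if q = 2 then (if s = 1 then (3,1,1) else (5,s,-1))
 else if q = 3 then (if s = 2 then (3,2,1) else if s = 1 then (4,1,1) else (5,s,-1))
 else if q = 4 then (if s = 2 then (4,2,1) else if s = 1 then (0,1,1) else (5,s,-1))
 else if q = 5 then (if s = 0 then (6,0,1) else (5,s,-1))
 else if q = 6 then (7,2,1) else if q = 7 then (8,2,1) else if q = 8 then (200,0,0)
 else if q = 9 then (if s = 5 then (9,2,-1) else if s = 6 then (9,1,-1) else (200,s,0))
 else if q < 50 then ld (q div 10) (q mod 10) s
 else if 100 \<le> q \<and> q < 200 then cd ((q - 100) div 20) ((q - 100) mod 20) s
 else (200, s, 0))"

definition M0 :: tm where
  "M0 = \<lparr>tm_states = 201, tm_symbols = 7, tm_delta = dl, tm_halt = 200\<rparr>"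

lemma cw_set: "x \<in> set (cw c) \<Longrightarrow> x = 5 \<or> x = 6"
  unfolding cw_def by (auto split: if_splits)

lemma cw_len: "length (cw c) \<le> 9"
  unfolding cw_def by auto

lemma valid_M0: "valid_tm M0"
proof -
  have "\<forall>q<201. \<forall>s<7. case dl q s of (q', s', d) \<Rightarrow> q' < 201 \<and> s' < 7 \<and> d \<in> {-1, 0, 1}"
proof (intro allI impI)
  fix q s :: nat assume q: "q < 201" and s: "s < 7"
  have c1: "\<And>c i. i < length (cw c) \<Longrightarrow> cw c ! i < 7" using cw_set nth_mem by fastforce
  have c2: "100 + 20 * c + i + 1 < 201 \<or> \<not> c \<le> 4" if "i < length (cw c)" for c i
    using that cw_len[of c] by linarith
  show "case dl q s of (q', s', d) \<Rightarrow> q' < 201 \<and> s' < 7 \<and> d \<in> {-1, 0, 1}"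
  proof (cases "10 \<le> q \<and> q < 50")
    case True
    then have "q div 10 \<le> 4" by auto
    then show ?thesis using True s unfolding dl_def ld_def by auto
  next
    case False
    note F = False
    show ?thesis
    proof (cases "100 \<le> q \<and> q < 200")
      case True
      have "(q - 100) div 20 \<le> 4" using True by auto
      then show ?thesis using True s c1 c2[of "(q - 100) mod 20" "(q - 100) div 20"] cw_len
        unfolding dl_def cd_def by (auto simp: not_less)
    next
      case False
      note F2 = False
      show ?thesis
      proof (cases "q < 10")
        case True
        then have "q = 0 \<or> q = 1 \<or> q = 2 \<or> q = 3 \<or> q = 4 \<or> q = 5 \<or> q = 6 \<or> q = 7 \<or> q = 8 \<or> q = 9" by auto
        then show ?thesis using s unfolding dl_def by auto
      next
        case False
        then have "dl q s = (200, s, 0)" using F F2 unfolding dl_def by auto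
        then show ?thesis using s by simp
      qed
    qed
  qed
qed
  then show ?thesis unfolding valid_tm_def M0_def by simp
qed



lemma tp_nth[simp]: "i < length w \<Longrightarrow> tp w (int i) = w ! i"
  by (simp add: tp_def)
lemma tp_len[simp]: "tp w (int (length w)) = 0"
  by (simp add: tp_def)
lemma tp_neg[simp]: "i < 0 \<Longrightarrow> tp w i = 0"
  by (simp add: tp_def)
lemma tp_upd: "i < length w \<Longrightarrow> (tp w)(int i := s) = tp (w[i := s])"
  by (auto simp: tp_def fun_eq_iff nth_list_update nat_eq_iff)
lemma tp_snoc: "(tp w)(int (length w) := s) = tp (w @ [s])"
  by (auto simp: tp_def fun_eq_iff nth_append nat_less_iff)

definition reach :: "tm_config \<Rightarrow> tm_config \<Rightarrow> nat \<Rightarrow> bool" where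
  "reach a b T \<longleftrightarrow> (\<exists>n\<le>T. (tm_step M0 ^^ n) a = b)"

lemma reach_trans: "reach a b T1 \<Longrightarrow> reach b c T2 \<Longrightarrow> reach a c (T1 + T2)"
  unfolding reach_def
proof -
  assume "\<exists>n\<le>T1. (tm_step M0 ^^ n) a = b" "\<exists>n\<le>T2. (tm_step M0 ^^ n) b = c"
  then obtain n1 n2 where "n1 \<le> T1" "(tm_step M0 ^^ n1) a = b" "n2 \<le> T2" "(tm_step M0 ^^ n2) b = c" by blast
  then show "\<exists>n\<le>T1 + T2. (tm_step M0 ^^ n) a = c"
    by (intro exI[of _ "n2 + n1"]) (simp add: funpow_add)
qed

lemma reach_mono: "reach a b T \<Longrightarrow> T \<le> T' \<Longrightarrow> reach a b T'"
  unfolding reach_def using le_trans by blast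

lemma reach_refl: "reach a a 0"
  unfolding reach_def by (intro exI[of _ 0]) simp

lemma reach_step: "q \<noteq> 200 \<Longrightarrow> dl q (t h) = (q', s', d) \<Longrightarrow> reach (q, h, t) (q', h + d, t(h := s')) 1"
  unfolding reach_def by (intro exI[of _ 1]) (simp add: tm_step_def M0_def)

lemma reach_step': "q \<noteq> 200 \<Longrightarrow> dl q (t h) = (q', s', d) \<Longrightarrow> h' = h + d \<Longrightarrow> t' = t(h := s') \<Longrightarrow> reach (q, h, t) (q', h', t') 1"
  using reach_step by simp

lemma run_right:
  assumes "\<And>s. s \<in> S \<Longrightarrow> dl q s = (q, s, 1)" "q \<noteq> 200" "\<forall>i<k. t (h + int i) \<in> S"
  shows "reach (q, h, t) (q, h + int k, t) k"
proof -
  have "(tm_step M0 ^^ k) (q, h, t) = (q, h + int k, t)" using assms(3)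
  proof (induction k arbitrary: h)
    case 0 then show ?case by simp
  next
    case (Suc k)
    have "t h \<in> S" using Suc.prems[rule_format, of 0] by simp
    then have s1: "tm_step M0 (q, h, t) = (q, h + 1, t)" using assms(1,2) by (simp add: tm_step_def M0_def)
    have "\<forall>i<k. t (h + 1 + int i) \<in> S" using Suc.prems by (metis Suc_less_eq add.commute add.left_commute of_nat_Suc)
    then have "(tm_step M0 ^^ k) (q, h + 1, t) = (q, h + 1 + int k, t)" using Suc.IH by blast
    moreover have "(tm_step M0 ^^ Suc k) (q, h, t) = (tm_step M0 ^^ k) (tm_step M0 (q, h, t))"
      by (simp only: funpow_Suc_right comp_apply)
    ultimately show ?case using s1 by (simp add: algebra_simps)
  qed
  then show ?thesis unfolding reach_def by blast
qed

lemma run_left: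
  assumes "\<And>s. s \<in> S \<Longrightarrow> dl q s = (q, s, -1)" "q \<noteq> 200" "\<forall>i<k. t (h - int i) \<in> S"
  shows "reach (q, h, t) (q, h - int k, t) k"
proof -
  have "(tm_step M0 ^^ k) (q, h, t) = (q, h - int k, t)" using assms(3)
  proof (induction k arbitrary: h)
    case 0 then show ?case by simp
  next
    case (Suc k)
    have "t h \<in> S" using Suc.prems[rule_format, of 0] by simp
    then have s1: "tm_step M0 (q, h, t) = (q, h - 1, t)" using assms(1,2) by (simp add: tm_step_def M0_def)
    have "\<forall>i<k. t (h - 1 - int i) \<in> S" using Suc.prems
      by (metis Suc_less_eq diff_diff_eq of_nat_Suc add.commute)
    then have "(tm_step M0 ^^ k) (q, h - 1, t) = (q, h - 1 - int k, t)" using Suc.IH by blast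
    moreover have "(tm_step M0 ^^ Suc k) (q, h, t) = (tm_step M0 ^^ k) (tm_step M0 (q, h, t))"
      by (simp only: funpow_Suc_right comp_apply)
    ultimately show ?case using s1 by (simp add: algebra_simps)
  qed
  then show ?thesis unfolding reach_def by blast
qed

lemma dl_loop: "1 \<le> p \<Longrightarrow> p \<le> 4 \<Longrightarrow> r < 10 \<Longrightarrow> dl (10*p + r) s = ld p r s"
proof -
  assume a: "1 \<le> p" "p \<le> 4" "r < 10"
  have "(10*p + r) div 10 = p" "(10*p+r) mod 10 = r" using a by auto
  moreover have "10*p + r < 50" using a by auto
  moreover have "10*p + r \<noteq> 0" "10*p + r \<noteq> 1" "10*p + r \<noteq> 2" "10*p + r \<noteq> 3" "10*p + r \<noteq> 4"
     "10*p + r \<noteq> 5" "10*p + r \<noteq> 6" "10*p + r \<noteq> 7" "10*p + r \<noteq> 8" "10*p + r \<noteq> 9" using a by auto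
  ultimately show ?thesis unfolding dl_def by presburger
qed

lemma dl_chain: "c \<le> 4 \<Longrightarrow> i < 20 \<Longrightarrow> dl (100 + 20*c + i) s = cd c i s"
proof -
  assume a: "c \<le> 4" "i < 20"
  have "(100 + 20*c + i - 100) div 20 = c" "(100 + 20*c + i - 100) mod 20 = i" using a by auto
  moreover have "100 + 20*c + i < 200" using a by auto
  ultimately show ?thesis unfolding dl_def by simp
qed

lemma bit_sym_ne0[simp]: "bit_sym b \<noteq> 0"
  by (simp add: bit_sym_def)

lemma vnext_le4: "vnext q b = Some q' \<Longrightarrow> q' \<le> 4"
  by (auto split: if_splits)

lemma q4cases: "q \<le> (4::nat) \<Longrightarrow> q = 0 \<or> q = 1 \<or> q = 2 \<or> q = 3 \<or> q = 4" by auto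

lemma vmatch1: "q \<le> 4 \<Longrightarrow> vnext q b = Some q' \<Longrightarrow> dl q (bit_sym b) = (q', bit_sym b, 1)"
  by (drule q4cases, cases b) (auto simp: dl_def bit_sym_def)
lemma vmatch2: "q \<le> 4 \<Longrightarrow> vnext q b = None \<Longrightarrow> dl q (bit_sym b) = (5, bit_sym b, -1)"
  by (drule q4cases, cases b) (auto simp: dl_def bit_sym_def)
lemma vmatch3: "q \<le> 4 \<Longrightarrow> q \<noteq> 0 \<Longrightarrow> dl q 0 = (5, 0, -1)"
  by (drule q4cases) (auto simp: dl_def)

lemma valid_run:
  assumes "q \<le> 4" "\<forall>i<length bs. t (int (n+i)) = bit_sym (bs!i)" "t (int (n + length bs)) = 0"
  shows "(vrun q bs = Some 0 \<longrightarrow> reach (q, int n, t) (0, int (n + length bs), t) (length bs)) \<and>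
    (vrun q bs \<noteq> Some 0 \<longrightarrow> (\<exists>h'. (int n \<le> h' \<or> (q \<noteq> 0 \<and> h' = int n - 1)) \<and> h' < int (n + length bs)
        \<and> reach (q, int n, t) (5, h', t) (length bs + 1)))"
  using assms
proof (induction bs arbitrary: q n)
  case Nil
  show ?case
  proof (cases "q = 0")
    case True then show ?thesis by (simp add: reach_refl)
  next
    case False
    have "reach (q, int n, t) (5, int n - 1, t) 1"
      using reach_step'[of q t "int n" 5 0 "-1"] vmatch3[OF Nil.prems(1) False] Nil.prems(3) False Nil.prems(1)
      by (simp add: fun_upd_idem)
    then show ?thesis using False by auto
  qed
next
  case (Cons b bs)
  have tb: "t (int n) = bit_sym b" using Cons.prems(2)[rule_format, of 0] by simp
  show ?case
  proof (cases "vnext q b")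
    case None
    have "reach (q, int n, t) (5, int n - 1, t) 1"
      using reach_step'[of q t "int n" 5 "bit_sym b" "-1"] vmatch2[OF Cons.prems(1) None] tb Cons.prems(1)
      by (simp add: fun_upd_idem)
    moreover have "q \<noteq> 0" using None by (cases "q = 0") auto
    ultimately show ?thesis using None
      by (intro conjI impI; simp) (intro exI[of _ "int n - 1"], auto intro: reach_mono)
  next
    case (Some q')
    have s1: "reach (q, int n, t) (q', int (Suc n), t) 1"
      using reach_step'[of q t "int n" q' "bit_sym b" 1 "int (Suc n)" t] vmatch1[OF Cons.prems(1) Some] tb Cons.prems(1)
      by (simp add: fun_upd_idem)
    have ih: "(vrun q' bs = Some 0 \<longrightarrow> reach (q', int (Suc n), t) (0, int (Suc n + length bs), t) (length bs)) \<and>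
    (vrun q' bs \<noteq> Some 0 \<longrightarrow> (\<exists>h'. (int (Suc n) \<le> h' \<or> (q' \<noteq> 0 \<and> h' = int (Suc n) - 1)) \<and> h' < int (Suc n + length bs)
        \<and> reach (q', int (Suc n), t) (5, h', t) (length bs + 1)))"
      using Cons.IH[of q' "Suc n"] vnext_le4[OF Some] Cons.prems(2,3)
      by (metis Suc_less_eq add_Suc_right add_Suc length_Cons nth_Cons_Suc)
    have vr: "vrun q (b # bs) = vrun q' bs" using Some by simp
    show ?thesis
    proof (intro conjI impI)
      assume "vrun q (b # bs) = Some 0"
      then show "reach (q, int n, t) (0, int (n + length (b # bs)), t) (length (b # bs))"
        using ih vr reach_trans[OF s1] by auto
    next
      assume "vrun q (b # bs) \<noteq> Some 0"
      then obtain h' where "int (Suc n) \<le> h' \<or> (q' \<noteq> 0 \<and> h' = int (Suc n) - 1)" "h' < int (Suc n + length bs)"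
        "reach (q', int (Suc n), t) (5, h', t) (length bs + 1)" using ih vr by auto
      then show "\<exists>h'. (int n \<le> h' \<or> q \<noteq> 0 \<and> h' = int n - 1) \<and> h' < int (n + length (b # bs)) \<and>
          reach (q, int n, t) (5, h', t) (length (b # bs) + 1)"
        using reach_trans[OF s1] by (intro exI[of _ h']) auto
    qed
  qed
qed

lemma home:
  assumes "1 \<le> p" "p \<le> 4" "\<forall>s\<in>set w. s \<noteq> 0" "j < length w"
  shows "reach (10*p+7, int j, tp w) (10*p, 0, tp w) (j + 2)"
proof -
  have dlH: "dl (10*p+7) s = (if s = 0 then (10*p, 0, 1) else (10*p+7, s, -1))" for s
    using dl_loop[of p 7 s] assms(1,2) unfolding ld_def by simp
  have a0: "reach (10*p+7, int j, tp w) (10*p+7, int j - int (Suc j), tp w) (Suc j)"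
  proof (rule run_left[of "{s. s \<noteq> 0}"])
    show "\<And>s. s \<in> {s. s \<noteq> 0} \<Longrightarrow> dl (10 * p + 7) s = (10 * p + 7, s, - 1)"
      using dlH by simp
    show "10 * p + 7 \<noteq> 200" using assms by auto
    show "\<forall>i<Suc j. tp w (int j - int i) \<in> {s. s \<noteq> 0}"
    proof (intro allI impI)
      fix i assume "i < Suc j"
      then have e: "int j - int i = int (j - i)" and l: "j - i < length w" using assms by auto
      have "w ! (j - i) \<noteq> 0" using assms(3) nth_mem[OF l] by blast
      then show "tp w (int j - int i) \<in> {s. s \<noteq> 0}" unfolding e using tp_nth[OF l] by simp
    qed
  qed
  have a: "reach (10*p+7, int j, tp w) (10*p+7, -1, tp w) (Suc j)" using a0 by simp
  have b: "reach (10*p+7, -1, tp w) (10*p, 0, tp w) 1"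
  proof (rule reach_step')
    show "10 * p + 7 \<noteq> 200" using assms by auto
    show "dl (10 * p + 7) (tp w (- 1)) = (10*p, 0, 1)" using dlH by simp
    show "tp w = (tp w)(- 1 := 0)" by (simp add: fun_upd_idem)
  qed simp
  show ?thesis using reach_trans[OF a b] by simp
qed

lemma chain_part:
  assumes "c \<le> 4" "i \<le> length (cw c)"
  shows "reach (100 + 20*c, int (length w), tp w) (100 + 20*c + i, int (length w + i), tp (w @ take i (cw c))) i"
  using assms(2)
proof (induction i)
  case 0 then show ?case by (simp add: reach_refl)
next
  case (Suc i)
  then have i: "i < length (cw c)" by simp
  have l: "length (w @ take i (cw c)) = length w + i" using i by simp
  have "reach (100 + 20*c + i, int (length w + i), tp (w @ take i (cw c)))
      (100 + 20*c + Suc i, int (length w + Suc i), tp (w @ take (Suc i) (cw c))) 1"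
  proof (rule reach_step')
    show "100 + 20 * c + i \<noteq> 200" using i cw_len[of c] assms(1) by simp
    have "tp (w @ take i (cw c)) (int (length w + i)) = 0" using tp_len[of "w @ take i (cw c)"] l by simp
    then show "dl (100 + 20 * c + i) (tp (w @ take i (cw c)) (int (length w + i))) = (100 + 20 * c + Suc i, cw c ! i, 1)"
      using i assms(1) cw_len[of c] by (simp add: dl_chain cd_def)
    show "int (length w + Suc i) = int (length w + i) + 1" by simp
    show "tp (w @ take (Suc i) (cw c)) = (tp (w @ take i (cw c)))(int (length w + i) := cw c ! i)"
      using tp_snoc[of "w @ take i (cw c)" "cw c ! i"] l i by (simp add: take_Suc_conv_app_nth)
  qed
  then show ?case using Suc reach_trans by fastforce
qed

definition cnext :: "nat \<Rightarrow> nat" where "cnext c = (if c < 4 then 10*(c+1)+7 else 9)"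

lemma chain_full:
  assumes "c \<le> 4"
  shows "reach (100 + 20*c, int (length w), tp w) (cnext c, int (length w + length (cw c)) - 1, tp (w @ cw c)) (length (cw c) + 1)"
proof -
  have a: "reach (100 + 20*c, int (length w), tp w) (100 + 20*c + length (cw c), int (length w + length (cw c)), tp (w @ cw c)) (length (cw c))"
    using chain_part[OF assms, of "length (cw c)" w] by simp
  have "tp (w @ cw c) (int (length w + length (cw c))) = 0" using tp_len[of "w @ cw c"] by simp
  then have b: "reach (100 + 20*c + length (cw c), int (length w + length (cw c)), tp (w @ cw c)) (cnext c, int (length w + length (cw c)) - 1, tp (w @ cw c)) 1"
    using reach_step'[of "100 + 20*c + length (cw c)" "tp (w @ cw c)" "int (length w + length (cw c))" "cnext c" 0 "-1"]
      assms cw_len[of c] by (simp add: dl_chain cd_def cnext_def fun_upd_idem)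
  show ?thesis using reach_trans[OF a b] by simp
qed



lemma step_r: "q \<noteq> 200 \<Longrightarrow> n < length w \<Longrightarrow> dl q (w ! n) = (q', s', 1) \<Longrightarrow>
   reach (q, int n, tp w) (q', int (Suc n), tp (w[n := s'])) 1"
proof -
  assume a: "q \<noteq> 200" "n < length w" "dl q (w ! n) = (q', s', 1)"
  have t: "tp w (int n) = w ! n" using a(2) by simp
  show ?thesis using reach_step'[of q "tp w" "int n" q' s' 1 "int (Suc n)" "tp (w[n := s'])"] a(1,3)
    unfolding t using tp_upd[OF a(2)] by simp
qed

lemma step_l: "q \<noteq> 200 \<Longrightarrow> n < length w \<Longrightarrow> dl q (w ! n) = (q', s', -1) \<Longrightarrow> 0 < n \<Longrightarrow>
   reach (q, int n, tp w) (q', int (n - 1), tp (w[n := s'])) 1"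
proof -
  assume a: "q \<noteq> 200" "n < length w" "dl q (w ! n) = (q', s', -1)" "0 < n"
  have e: "int (n - 1) = int n - 1" using a(4) by (simp add: of_nat_diff)
  have t: "tp w (int n) = w ! n" using a(2) by simp
  show ?thesis using reach_step'[of q "tp w" "int n" q' s' "-1" "int (n - 1)" "tp (w[n := s'])"] a(1,3)
    unfolding e t using tp_upd[OF a(2)] by simp
qed

lemma step_end: "q \<noteq> 200 \<Longrightarrow> dl q 0 = (q', s', -1) \<Longrightarrow> 0 < length w \<Longrightarrow>
   reach (q, int (length w), tp w) (q', int (length w - 1), tp (w @ [s'])) 1"
proof -
  assume a: "q \<noteq> 200" "dl q 0 = (q', s', -1)" "0 < length w"
  have e: "int (length w - 1) = int (length w) - 1" using a(3) by (cases "length w") auto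
  show ?thesis using reach_step'[of q "tp w" "int (length w)" q' s' "-1" "int (length w - 1)" "tp (w @ [s'])"] a
    unfolding e by (simp add: tp_snoc)
qed

lemma run_r: "(\<And>s. s \<in> S \<Longrightarrow> dl q s = (q, s, 1)) \<Longrightarrow> q \<noteq> 200 \<Longrightarrow> n + k \<le> length w \<Longrightarrow>
   (\<forall>i<k. w ! (n + i) \<in> S) \<Longrightarrow> reach (q, int n, tp w) (q, int (n + k), tp w) k"
proof -
  assume a: "\<And>s. s \<in> S \<Longrightarrow> dl q s = (q, s, 1)" "q \<noteq> 200" "n + k \<le> length w" "\<forall>i<k. w ! (n + i) \<in> S"
  have c: "\<forall>i<k. tp w (int n + int i) \<in> S"
  proof (intro allI impI)
    fix i assume "i < k"
    then have e: "int n + int i = int (n + i)" and l: "n + i < length w" using a by auto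
    have "w ! (n + i) \<in> S" using a(4) \<open>i < k\<close> by blast
    then show "tp w (int n + int i) \<in> S" unfolding e using tp_nth[OF l] by simp
  qed
  have "reach (q, int n, tp w) (q, int n + int k, tp w) k" using run_right[OF a(1) a(2) c] .
  then show ?thesis by simp
qed

lemma run_l: "(\<And>s. s \<in> S \<Longrightarrow> dl q s = (q, s, -1)) \<Longrightarrow> q \<noteq> 200 \<Longrightarrow> k \<le> n \<Longrightarrow> n < length w \<Longrightarrow>
   (\<forall>i<k. w ! (n - i) \<in> S) \<Longrightarrow> reach (q, int n, tp w) (q, int (n - k), tp w) k"
proof -
  assume a: "\<And>s. s \<in> S \<Longrightarrow> dl q s = (q, s, -1)" "q \<noteq> 200" "k \<le> n" "n < length w" "\<forall>i<k. w ! (n - i) \<in> S"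
  have c: "\<forall>i<k. tp w (int n - int i) \<in> S"
  proof (intro allI impI)
    fix i assume "i < k"
    then have e: "int n - int i = int (n - i)" and l: "n - i < length w" using a by auto
    have "w ! (n - i) \<in> S" using a(5) \<open>i < k\<close> by blast
    then show "tp w (int n - int i) \<in> S" unfolding e using tp_nth[OF l] by simp
  qed
  have r: "reach (q, int n, tp w) (q, int n - int k, tp w) k" using run_left[OF a(1) a(2) c] .
  have e: "int n - int k = int (n - k)" using a(3) by simp
  show ?thesis using r unfolding e .
qed


lemma enc_instr_cells:
  fixes o' j k
  defines "e \<equiv> enc_instr (o', j, k)"
  shows "length e = j + k + 4" "e ! 0 = hd (enc_op o')"
    "\<And>r. r < j \<Longrightarrow> e ! (2 + r) = True" "e ! (2 + j) = False"
    "\<And>r. r < k \<Longrightarrow> e ! (3 + j + r) = True" "e ! (3 + j + k) = False"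
proof -
  have eo: "length (enc_op o') = 2" by (cases o') auto
  have ed: "e = enc_op o' @ replicate j True @ [False] @ replicate k True @ [False]"
    unfolding e_def by (simp add: enc_nat_def)
  show "length e = j + k + 4" using eo ed by simp
  show "e ! 0 = hd (enc_op o')" using ed by (cases o') auto
  show "\<And>r. r < j \<Longrightarrow> e ! (2 + r) = True" using ed eo by (simp add: nth_append)
  show "e ! (2 + j) = False" using ed eo by (simp add: nth_append)
  show "\<And>r. r < k \<Longrightarrow> e ! (3 + j + r) = True" using ed eo by (simp add: nth_append)
  show "e ! (3 + j + k) = False" using ed eo by (simp add: nth_append)
qed

lemma loop_iter:
  assumes p: "1 \<le> p" "p \<le> 4"
  and W: "W = map bit_sym (enc_slp (P1 @ (o', j, k) # P2)) @ Y"
  and Y: "\<forall>s\<in>set Y. s = 5 \<or> s = 6"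
  shows "reach (10*p, int (length (enc_slp P1)), tp W)
     (10*p, int (length (enc_slp P1) + (j + k + 4)), tp (W @ [5])) (3 * length W)"
proof -
  define e where "e = enc_instr (o', j, k)"
  define h0 where "h0 = length (enc_slp P1)"
  define N where "N = length W"
  note ec = enc_instr_cells[where o'=o' and j=j and k=k, folded e_def]
  have encP: "enc_slp (P1 @ (o', j, k) # P2) = enc_slp P1 @ e @ enc_slp P2"
    unfolding e_def enc_slp_def by simp
  have Wd: "W = map bit_sym (enc_slp P1) @ map bit_sym e @ map bit_sym (enc_slp P2) @ Y"
    using W encP by simp
  have hN: "h0 + j + k + 4 \<le> N" unfolding N_def h0_def using Wd ec(1) by simp
  have cell: "W ! (h0 + r) = bit_sym (e ! r)" if "r < j + k + 4" for r
    using that ec(1) unfolding Wd h0_def by (simp add: nth_append)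
  have Wset: "W ! n \<noteq> 0 \<and> W ! n \<noteq> 3 \<and> W ! n \<noteq> 4" if "n < N" for n
  proof -
    have "W ! n \<in> set W" using that N_def by simp
    then have "W ! n \<in> bit_sym ` UNIV \<or> W ! n \<in> set Y" unfolding Wd by auto
    then show ?thesis using Y by (auto simp: bit_sym_def)
  qed
  have d: "dl (10*p + r) s = ld p r s" if "r < 10" for r s using dl_loop[OF p that] .
  have d0: "dl (10*p) s = ld p 0 s" for s using d[of 0] by simp
  define b0 where "b0 = hd (enc_op o')"
  define m where "m = bit_sym b0 + 2"
  define W1 where "W1 = W[h0 := m]"
  have lW1: "length W1 = N" unfolding W1_def N_def by simp
  have Wh0: "W ! h0 = bit_sym b0" using cell[of 0] ec(2) b0_def by simp
  have s1: "reach (10*p, int h0, tp W) (10*p+1, int (Suc h0), tp W1) 1"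
    unfolding W1_def
  proof (rule step_r)
    show "10 * p \<noteq> 200" using p by simp
    show "h0 < length W" using hN N_def by simp
    show "dl (10 * p) (W ! h0) = (10 * p + 1, m, 1)" unfolding d0 Wh0 m_def
      by (cases b0) (simp_all add: ld_def bit_sym_def)
  qed
  have s2: "reach (10*p+1, int (Suc h0), tp W1) (10*p+1, int N, tp W1) (N - Suc h0)"
  proof -
    have "reach (10*p+1, int (Suc h0), tp W1) (10*p+1, int (Suc h0 + (N - Suc h0)), tp W1) (N - Suc h0)"
    proof (rule run_r[of "{s. s \<noteq> 0}"])
      show "\<And>s. s \<in> {s. s \<noteq> 0} \<Longrightarrow> dl (10 * p + 1) s = (10 * p + 1, s, 1)"
        using d[of 1] by (simp add: ld_def)
      show "10 * p + 1 \<noteq> 200" using p by simp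
      show "Suc h0 + (N - Suc h0) \<le> length W1" using lW1 hN by simp
      show "\<forall>i<N - Suc h0. W1 ! (Suc h0 + i) \<in> {s. s \<noteq> 0}"
      proof (intro allI impI)
        fix i assume "i < N - Suc h0"
        then have "Suc h0 + i < N" "Suc h0 + i \<noteq> h0" by auto
        then show "W1 ! (Suc h0 + i) \<in> {s. s \<noteq> 0}" using Wset[of "Suc h0 + i"] unfolding W1_def by simp
      qed
    qed
    moreover have "Suc h0 + (N - Suc h0) = N" using hN by simp
    ultimately show ?thesis by simp
  qed
  have s3: "reach (10*p+1, int N, tp W1) (10*p+2, int (N - 1), tp (W1 @ [5])) 1"
    using step_end[of "10*p+1" "10*p+2" 5 W1] d[of 1] p lW1 hN by (simp add: ld_def)
  have s4: "reach (10*p+2, int (N - 1), tp (W1 @ [5])) (10*p+2, int h0, tp (W1 @ [5])) (N - 1 - h0)"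
  proof -
    have "reach (10*p+2, int (N - 1), tp (W1 @ [5])) (10*p+2, int (N - 1 - (N - 1 - h0)), tp (W1 @ [5])) (N - 1 - h0)"
    proof (rule run_l[of "{s. s \<noteq> 3 \<and> s \<noteq> 4}"])
      show "\<And>s. s \<in> {s. s \<noteq> 3 \<and> s \<noteq> 4} \<Longrightarrow> dl (10 * p + 2) s = (10 * p + 2, s, - 1)"
        using d[of 2] by (simp add: ld_def)
      show "10 * p + 2 \<noteq> 200" using p by simp
      show "N - 1 - h0 \<le> N - 1" by simp
      show "N - 1 < length (W1 @ [5])" using lW1 by simp
      show "\<forall>i<N - 1 - h0. (W1 @ [5]) ! (N - 1 - i) \<in> {s. s \<noteq> 3 \<and> s \<noteq> 4}"
      proof (intro allI impI)
        fix i assume "i < N - 1 - h0"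
        then have a: "N - 1 - i < N" "N - 1 - i \<noteq> h0" by auto
        then have "(W1 @ [5]) ! (N - 1 - i) = W ! (N - 1 - i)" using lW1 unfolding W1_def by (simp add: nth_append)
        then show "(W1 @ [5]) ! (N - 1 - i) \<in> {s. s \<noteq> 3 \<and> s \<noteq> 4}" using Wset[OF a(1)] by simp
      qed
    qed
    moreover have "N - 1 - (N - 1 - h0) = h0" using hN by simp
    ultimately show ?thesis by simp
  qed
  have s5: "reach (10*p+2, int h0, tp (W1 @ [5])) (10*p+3, int (Suc h0), tp (W @ [5])) 1"
  proof -
    have l: "h0 < length (W1 @ [5])" using lW1 hN by simp
    have c: "(W1 @ [5]) ! h0 = m" using lW1 hN unfolding W1_def by (simp add: nth_append)
    have u: "(W1 @ [5])[h0 := bit_sym b0] = W @ [5]" using lW1 hN Wh0 unfolding W1_def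
      by (simp add: list_update_append N_def) (metis list_update_id)
    have "dl (10*p+2) m = (10*p+3, bit_sym b0, 1)" using d[of 2] unfolding m_def
      by (cases b0) (simp_all add: ld_def bit_sym_def)
    then show ?thesis using step_r[of "10*p+2" h0 "W1 @ [5]" "10*p+3" "bit_sym b0", OF _ l] c u p by simp
  qed
  have s6: "reach (10*p+3, int (Suc h0), tp (W @ [5])) (10*p+4, int (h0 + 2), tp (W @ [5])) 1"
  proof -
    have l: "Suc h0 < length (W @ [5])" using hN N_def by simp
    have "dl (10*p+3) ((W @ [5]) ! Suc h0) = (10*p+4, (W @ [5]) ! Suc h0, 1)" using d[of 3] by (simp add: ld_def)
    then have "reach (10*p+3, int (Suc h0), tp (W @ [5])) (10*p+4, int (Suc (Suc h0)), tp ((W @ [5])[Suc h0 := (W @ [5]) ! Suc h0])) 1"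
      using step_r[of "10*p+3" "Suc h0" "W @ [5]", OF _ l] p by simp
    then show ?thesis by simp
  qed
  have cellT: "(W @ [5]) ! (h0 + r) = bit_sym (e ! r)" if "r < j + k + 4" for r
    using cell[OF that] hN that N_def by (simp add: nth_append)
  have s7: "reach (10*p+4, int (h0 + 2), tp (W @ [5])) (10*p+4, int (h0 + 2 + j), tp (W @ [5])) j"
  proof (rule run_r[of "{2}"])
    show "\<And>s. s \<in> {2} \<Longrightarrow> dl (10 * p + 4) s = (10 * p + 4, s, 1)" using d[of 4] by (simp add: ld_def)
    show "10 * p + 4 \<noteq> 200" using p by simp
    show "h0 + 2 + j \<le> length (W @ [5])" using hN N_def by simp
    show "\<forall>i<j. (W @ [5]) ! (h0 + 2 + i) \<in> {2}"
    proof (intro allI impI)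
      fix i assume i: "i < j"
      have "(W @ [5]) ! (h0 + (2 + i)) = bit_sym (e ! (2 + i))" using cellT[of "2 + i"] i by simp
      then show "(W @ [5]) ! (h0 + 2 + i) \<in> {2}" using ec(3)[OF i] by (simp add: bit_sym_def add.assoc)
    qed
  qed
  have s8: "reach (10*p+4, int (h0 + 2 + j), tp (W @ [5])) (10*p+5, int (h0 + 3 + j), tp (W @ [5])) 1"
  proof -
    have l: "h0 + 2 + j < length (W @ [5])" using hN N_def by simp
    have c: "(W @ [5]) ! (h0 + 2 + j) = 1" using cellT[of "2 + j"] ec(4) by (simp add: bit_sym_def add.assoc)
    have "dl (10*p+4) 1 = (10*p+5, 1, 1)" using d[of 4] by (simp add: ld_def)
    then have r: "reach (10*p+4, int (h0 + 2 + j), tp (W @ [5])) (10*p+5, int (Suc (h0 + 2 + j)), tp ((W @ [5])[h0 + 2 + j := 1])) 1"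
      using step_r[of "10*p+4" "h0 + 2 + j" "W @ [5]", OF _ l] c p by simp
    have u: "(W @ [5])[h0 + 2 + j := 1] = W @ [5]" using c by (metis list_update_id)
    have e: "Suc (h0 + 2 + j) = h0 + 3 + j" by simp
    show ?thesis using r unfolding u e .
  qed
  have s9: "reach (10*p+5, int (h0 + 3 + j), tp (W @ [5])) (10*p+5, int (h0 + 3 + j + k), tp (W @ [5])) k"
  proof (rule run_r[of "{2}"])
    show "\<And>s. s \<in> {2} \<Longrightarrow> dl (10 * p + 5) s = (10 * p + 5, s, 1)" using d[of 5] by (simp add: ld_def)
    show "10 * p + 5 \<noteq> 200" using p by simp
    show "h0 + 3 + j + k \<le> length (W @ [5])" using hN N_def by simp
    show "\<forall>i<k. (W @ [5]) ! (h0 + 3 + j + i) \<in> {2}"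
    proof (intro allI impI)
      fix i assume i: "i < k"
      have "(W @ [5]) ! (h0 + (3 + j + i)) = bit_sym (e ! (3 + j + i))" using cellT[of "3 + j + i"] i by simp
      then show "(W @ [5]) ! (h0 + 3 + j + i) \<in> {2}" using ec(5)[OF i] by (simp add: bit_sym_def add.assoc)
    qed
  qed
  have s10: "reach (10*p+5, int (h0 + 3 + j + k), tp (W @ [5])) (10*p, int (h0 + (j + k + 4)), tp (W @ [5])) 1"
  proof -
    have l: "h0 + 3 + j + k < length (W @ [5])" using hN N_def by simp
    have c: "(W @ [5]) ! (h0 + 3 + j + k) = 1" using cellT[of "3 + j + k"] ec(6) by (simp add: bit_sym_def add.assoc)
    have "dl (10*p+5) 1 = (10*p, 1, 1)" using d[of 5] by (simp add: ld_def)
    then have r: "reach (10*p+5, int (h0 + 3 + j + k), tp (W @ [5])) (10*p, int (Suc (h0 + 3 + j + k)), tp ((W @ [5])[h0 + 3 + j + k := 1])) 1"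
      using step_r[of "10*p+5" "h0 + 3 + j + k" "W @ [5]", OF _ l] c p by simp
    have u: "(W @ [5])[h0 + 3 + j + k := 1] = W @ [5]" using c by (metis list_update_id)
    have e: "Suc (h0 + 3 + j + k) = h0 + (j + k + 4)" by simp
    show ?thesis using r unfolding u e .
  qed
  have all: "reach (10*p, int h0, tp W) (10*p, int (h0 + (j + k + 4)), tp (W @ [5]))
     (1 + (N - Suc h0) + 1 + (N - 1 - h0) + 1 + 1 + j + 1 + k + 1)"
    using reach_trans[OF reach_trans[OF reach_trans[OF reach_trans[OF reach_trans[OF reach_trans[OF
       reach_trans[OF reach_trans[OF reach_trans[OF s1 s2] s3] s4] s5] s6] s7] s8] s9] s10] .
  have "1 + (N - Suc h0) + 1 + (N - 1 - h0) + 1 + 1 + j + 1 + k + 1 \<le> 3 * length W"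
    using hN N_def by simp
  then show ?thesis using reach_mono[OF all] h0_def by simp
qed


lemma len_enc_snoc: "length (enc_slp (P1 @ [(o', j, k)])) = length (enc_slp P1) + (j + k + 4)"
  unfolding enc_slp_def using len_enc_instr[of o' j k] by simp

lemma loop_all:
  assumes p: "1 \<le> p" "p \<le> 4" and Y: "\<forall>s\<in>set Y. s = 5 \<or> s = 6"
  shows "P1 @ P2 = P \<Longrightarrow> reach (10*p, int (length (enc_slp P1)), tp (map bit_sym (enc_slp P) @ Y @ replicate (length P1) 5))
     (10*p, int (length (enc_slp P)), tp (map bit_sym (enc_slp P) @ Y @ replicate (length P) 5))
     (length P2 * (3 * (length (enc_slp P) + length Y + length P)))"
proof (induction P2 arbitrary: P1)
  case Nil
  then show ?case using reach_refl by simp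
next
  case (Cons i P2)
  obtain o' j k where i: "i = (o', j, k)" by (cases i) auto
  define Y' where "Y' = Y @ replicate (length P1) 5"
  have Y': "\<forall>s\<in>set Y'. s = 5 \<or> s = 6" using Y unfolding Y'_def by auto
  have a: "reach (10*p, int (length (enc_slp P1)), tp (map bit_sym (enc_slp P) @ Y'))
     (10*p, int (length (enc_slp P1) + (j + k + 4)), tp ((map bit_sym (enc_slp P) @ Y') @ [5]))
     (3 * length (map bit_sym (enc_slp P) @ Y'))"
    using loop_iter[OF p _ Y', of "map bit_sym (enc_slp P) @ Y'" P1 o' j k P2] Cons.prems i by simp
  have lp: "length P1 < length P" using Cons.prems by auto
  have b: "reach (10*p, int (length (enc_slp (P1 @ [i]))), tp (map bit_sym (enc_slp P) @ Y @ replicate (length (P1 @ [i])) 5))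
     (10*p, int (length (enc_slp P)), tp (map bit_sym (enc_slp P) @ Y @ replicate (length P) 5))
     (length P2 * (3 * (length (enc_slp P) + length Y + length P)))"
    using Cons.IH[of "P1 @ [i]"] Cons.prems by simp
  have e1: "length (enc_slp (P1 @ [i])) = length (enc_slp P1) + (j + k + 4)" using i len_enc_snoc by simp
  have e2: "(map bit_sym (enc_slp P) @ Y') @ [5] = map bit_sym (enc_slp P) @ Y @ replicate (length (P1 @ [i])) 5"
    unfolding Y'_def by (simp add: replicate_append_same)
  have c: "reach (10*p, int (length (enc_slp P1)), tp (map bit_sym (enc_slp P) @ Y'))
     (10*p, int (length (enc_slp P)), tp (map bit_sym (enc_slp P) @ Y @ replicate (length P) 5))
     (3 * length (map bit_sym (enc_slp P) @ Y') + length P2 * (3 * (length (enc_slp P) + length Y + length P)))"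
    using reach_trans[OF a] b unfolding e1 e2 by blast
  have "3 * length (map bit_sym (enc_slp P) @ Y') \<le> 3 * (length (enc_slp P) + length Y + length P)"
    unfolding Y'_def using lp by simp
  then show ?case using reach_mono[OF c] unfolding Y'_def by simp
qed

lemma all_nz: "\<forall>s\<in>set (map bit_sym x @ Y). s \<noteq> 0" if "\<forall>s\<in>set Y. s = 5 \<or> s = 6"
  using that by (auto simp: bit_sym_def)

lemma enc_nil: "enc_slp [] = []" by (simp add: enc_slp_def)

lemma phase:
  fixes P :: "slp_instr list"
  assumes p: "1 \<le> p" "p \<le> 4" and Y: "\<forall>s\<in>set Y. s = 5 \<or> s = 6" "Y \<noteq> []"
  defines "w \<equiv> map bit_sym (enc_slp P) @ Y @ replicate (length P) 5"
  shows "reach (10*p, 0, tp (map bit_sym (enc_slp P) @ Y))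
     (cnext p, int (length w + length (cw p)) - 1, tp (w @ cw p))
     (length P * (3 * (length (enc_slp P) + length Y + length P)) + length w + 12)"
proof -
  define X where "X = map bit_sym (enc_slp P)"
  define L where "L = length X"
  have d: "dl (10*p + r) s = ld p r s" if "r < 10" for r s using dl_loop[OF p that] .
  have d0: "dl (10*p) s = ld p 0 s" for s using d[of 0] by simp
  have a: "reach (10*p, 0, tp (X @ Y)) (10*p, int L, tp w)
     (length P * (3 * (length (enc_slp P) + length Y + length P)))"
    using loop_all[OF p Y(1), of "[]" P P] unfolding w_def X_def L_def by (simp add: enc_nil)
  have wl: "length w = L + length Y + length P" unfolding w_def L_def X_def by simp
  have wL: "w ! L \<in> {5, 6}" using Y unfolding w_def L_def X_def by (cases Y) (auto simp: nth_append)
  have b: "reach (10*p, int L, tp w) (10*p+6, int L, tp w) 1"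
  proof (rule reach_step')
    show "10 * p \<noteq> 200" using p by simp
    have "tp w (int L) = w ! L" using wl Y(2) by (cases Y) auto
    then show "dl (10 * p) (tp w (int L)) = (10 * p + 6, tp w (int L), 0)" using wL d0 by (auto simp: ld_def)
  qed simp_all
  have c: "reach (10*p+6, int L, tp w) (10*p+6, int (L + (length Y + length P)), tp w) (length Y + length P)"
  proof (rule run_r[of "{s. s \<noteq> 0}"])
    show "\<And>s. s \<in> {s. s \<noteq> 0} \<Longrightarrow> dl (10 * p + 6) s = (10 * p + 6, s, 1)" using d[of 6] by (simp add: ld_def)
    show "10 * p + 6 \<noteq> 200" using p by simp
    show "L + (length Y + length P) \<le> length w" using wl by simp
    show "\<forall>i<length Y + length P. w ! (L + i) \<in> {s. s \<noteq> 0}"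
    proof (intro allI impI)
      fix i assume "i < length Y + length P"
      then have "w ! (L + i) \<in> set w" using wl by simp
      then show "w ! (L + i) \<in> {s. s \<noteq> 0}" using all_nz[OF Y(1), of "enc_slp P"] unfolding w_def by auto
    qed
  qed
  have c2: "reach (10*p+6, int (length w), tp w) (100 + 20*p, int (length w), tp w) 1"
  proof (rule reach_step')
    show "10 * p + 6 \<noteq> 200" using p by simp
    show "dl (10 * p + 6) (tp w (int (length w))) = (100 + 20 * p, 0, 0)" using d[of 6] by (simp add: ld_def)
  qed (simp_all add: fun_upd_idem)
  have e: "reach (100 + 20*p, int (length w), tp w) (cnext p, int (length w + length (cw p)) - 1, tp (w @ cw p)) (length (cw p) + 1)"
    using chain_full[OF p(2)] .
  have t: "reach (10*p, 0, tp (X @ Y)) (cnext p, int (length w + length (cw p)) - 1, tp (w @ cw p))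
     (length P * (3 * (length (enc_slp P) + length Y + length P)) + 1 + (length Y + length P) + 1 + (length (cw p) + 1))"
  proof -
    have eq: "L + (length Y + length P) = length w" using wl by simp
    show ?thesis using reach_trans[OF reach_trans[OF reach_trans[OF reach_trans[OF a b] c[unfolded eq]] c2] e] .
  qed
  show ?thesis using reach_mono[OF t] cw_len[of p] wl unfolding X_def by simp
qed

definition conv :: "nat \<Rightarrow> nat" where "conv s = (if s = 5 then 2 else 1)"

lemma convert:
  assumes "\<forall>s\<in>set Ys. s = 5 \<or> s = 6"
  shows "reach (9, int (length A + length Ys) - 1, tp (A @ Ys @ B)) (9, int (length A) - 1, tp (A @ map conv Ys @ B)) (length Ys)"
  using assms
proof (induction Ys arbitrary: B rule: rev_induct)
  case Nil then show ?case using reach_refl by simp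
next
  case (snoc y Ys)
  define n where "n = length A + length Ys"
  have y: "y = 5 \<or> y = 6" using snoc.prems by simp
  have l: "n < length (A @ (Ys @ [y]) @ B)" unfolding n_def by simp
  have c: "(A @ (Ys @ [y]) @ B) ! n = y" unfolding n_def by (simp add: nth_append)
  have u: "(A @ (Ys @ [y]) @ B)[n := conv y] = A @ Ys @ (conv y # B)" unfolding n_def
    by (simp add: list_update_append)
  have s: "reach (9, int n, tp (A @ (Ys @ [y]) @ B)) (9, int n - 1, tp (A @ Ys @ (conv y # B))) 1"
  proof (rule reach_step')
    show "dl 9 (tp (A @ (Ys @ [y]) @ B) (int n)) = (9, conv y, -1)" using tp_nth[OF l] c y
      by (auto simp: dl_def conv_def)
    show "tp (A @ Ys @ conv y # B) = (tp (A @ (Ys @ [y]) @ B))(int n := conv y)" using tp_upd[OF l] u by simp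
  qed simp_all
  have ih: "reach (9, int (length A + length Ys) - 1, tp (A @ Ys @ (conv y # B))) (9, int (length A) - 1, tp (A @ map conv Ys @ (conv y # B))) (length Ys)"
    using snoc.IH[of "conv y # B"] snoc.prems by simp
  have e: "int (length A + length (Ys @ [y])) - 1 = int n" unfolding n_def by simp
  show ?case using reach_trans[OF s] ih unfolding e n_def by simp
qed



lemma enc_len_ge: "4 * length P \<le> length (enc_slp P)"
proof (induction P)
  case Nil then show ?case by (simp add: enc_slp_def)
next
  case (Cons a P)
  obtain o' j k where "a = (o', j, k)" by (cases a) auto
  then have "length (enc_instr a) \<ge> 4" using len_enc_instr by simp
  then show ?case using Cons by (simp add: enc_slp_def)
qed

lemma cw_ne: "p \<le> 4 \<Longrightarrow> cw p \<noteq> []"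
  unfolding cw_def by auto

lemma phase_home:
  fixes P :: "slp_instr list"
  assumes p: "1 \<le> p" "p \<le> 3" and Y: "\<forall>s\<in>set Y. s = 5 \<or> s = 6" "Y \<noteq> []"
    and YB: "length Y \<le> 3 * length P + 14"
  defines "B \<equiv> length (enc_slp P) + 4 * length P + 16"
  shows "reach (10*p, 0, tp (map bit_sym (enc_slp P) @ Y))
     (10*(p+1), 0, tp (map bit_sym (enc_slp P) @ (Y @ replicate (length P) 5 @ cw p)))
     (3 * length P * B + 2 * B + 30)"
proof -
  define w where "w = map bit_sym (enc_slp P) @ Y @ replicate (length P) 5"
  have a: "reach (10*p, 0, tp (map bit_sym (enc_slp P) @ Y))
     (cnext p, int (length w + length (cw p)) - 1, tp (w @ cw p))
     (length P * (3 * (length (enc_slp P) + length Y + length P)) + length w + 12)"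
    using phase[of p Y P] p Y unfolding w_def by simp
  have cn: "cnext p = 10*(p+1) + 7" using p unfolding cnext_def by simp
  define j where "j = length w + length (cw p) - 1"
  have ne: "cw p \<noteq> []" using cw_ne p by simp
  have jj: "int (length w + length (cw p)) - 1 = int j" unfolding j_def using ne by (cases "cw p") auto
  have nz: "\<forall>s\<in>set (w @ cw p). s \<noteq> 0" unfolding w_def using Y(1) cw_set[of _ p]
    by (auto simp: bit_sym_def) fastforce
  have h: "reach (10*(p+1)+7, int j, tp (w @ cw p)) (10*(p+1), 0, tp (w @ cw p)) (j + 2)"
    using home[of "p+1" "w @ cw p" j] p nz ne unfolding j_def by simp
  have t: "reach (10*p, 0, tp (map bit_sym (enc_slp P) @ Y)) (10*(p+1), 0, tp (w @ cw p))
     (length P * (3 * (length (enc_slp P) + length Y + length P)) + length w + 12 + (j + 2))"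
    using reach_trans[OF a[unfolded cn jj] h] .
  have lw: "length w \<le> B" unfolding w_def B_def using YB by simp
  have "length (enc_slp P) + length Y + length P \<le> B" unfolding B_def using YB by simp
  then have f1: "length P * (3 * (length (enc_slp P) + length Y + length P)) \<le> length P * (3 * B)"
    by (intro mult_le_mono2) simp
  have f2: "length P * (3 * B) = 3 * length P * B" by simp
  have f3: "j \<le> B + 9" unfolding j_def using lw cw_len[of p] by simp
  have "length P * (3 * (length (enc_slp P) + length Y + length P)) + length w + 12 + (j + 2) \<le> 3 * length P * B + 2 * B + 30"
    using f1 f2 f3 lw by linarith
  then show ?thesis using reach_mono[OF t] unfolding w_def by simp
qed


lemma phase_final:
  fixes P :: "slp_instr list"
  assumes Y: "\<forall>s\<in>set Y. s = 5 \<or> s = 6" "Y \<noteq> []"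
    and YB: "length Y \<le> 3 * length P + 14"
  defines "B \<equiv> length (enc_slp P) + 4 * length P + 16"
  shows "reach (40, 0, tp (map bit_sym (enc_slp P) @ Y))
     (200, int (length (enc_slp P)) - 1, tp (map bit_sym (enc_slp P) @ map conv (Y @ replicate (length P) 5 @ [6])))
     (3 * length P * B + 2 * B + 30)"
proof -
  define X where "X = map bit_sym (enc_slp P)"
  define w where "w = X @ Y @ replicate (length P) 5"
  define Ys where "Ys = Y @ replicate (length P) 5 @ [6]"
  have a: "reach (10*4, 0, tp (X @ Y))
     (cnext 4, int (length w + length (cw 4)) - 1, tp (w @ cw 4))
     (length P * (3 * (length (enc_slp P) + length Y + length P)) + length w + 12)"
    using phase[of 4 Y P] Y unfolding w_def X_def by simp
  have wY: "w @ cw 4 = X @ Ys" unfolding w_def Ys_def cw_def by simp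
  have pos: "int (length w + length (cw 4)) - 1 = int (length X + length Ys) - 1" unfolding w_def Ys_def cw_def by simp
  have YsS: "\<forall>s\<in>set Ys. s = 5 \<or> s = 6" unfolding Ys_def using Y by auto
  have b: "reach (9, int (length X + length Ys) - 1, tp (X @ Ys @ [])) (9, int (length X) - 1, tp (X @ map conv Ys @ [])) (length Ys)"
    using convert[OF YsS] .
  note b' = b[unfolded append_Nil2]
  have cn: "cnext 4 = 9" "(10::nat) * 4 = 40" by (simp_all add: cnext_def)
  have c: "reach (9, int (length X) - 1, tp (X @ map conv Ys)) (200, int (length X) - 1, tp (X @ map conv Ys)) 1"
  proof (rule reach_step')
    show "dl 9 (tp (X @ map conv Ys) (int (length X) - 1)) = (200, tp (X @ map conv Ys) (int (length X) - 1), 0)"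
    proof (cases "length X")
      case 0 then show ?thesis by (simp add: dl_def)
    next
      case (Suc n)
      then have e: "int (length X) - 1 = int n" by simp
      have "X ! n \<in> set X" using Suc by simp
      then have "X ! n = 1 \<or> X ! n = 2" unfolding X_def by (auto simp: bit_sym_def)
      then show ?thesis unfolding e using Suc by (auto simp: dl_def nth_append)
    qed
  qed simp_all
  have "4 * length P \<le> length (enc_slp P)" by (rule enc_len_ge)
  have t: "reach (40, 0, tp (X @ Y)) (200, int (length X) - 1, tp (X @ map conv Ys))
    (length P * (3 * (length (enc_slp P) + length Y + length P)) + length w + 12 + length Ys + 1)"
    using reach_trans[OF reach_trans[OF a[unfolded wY pos cn] b'] c] by simp
  have lw: "length w \<le> B" unfolding w_def B_def X_def using YB by simp
  have "length (enc_slp P) + length Y + length P \<le> B" unfolding B_def using YB by simp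
  then have f1: "length P * (3 * (length (enc_slp P) + length Y + length P)) \<le> length P * (3 * B)"
    by (intro mult_le_mono2) simp
  have f2: "length P * (3 * B) = 3 * length P * B" by simp
  have f3: "length Ys \<le> B" unfolding Ys_def B_def using YB by simp
  have "length P * (3 * (length (enc_slp P) + length Y + length P)) + length w + 12 + length Ys + 1 \<le> 3 * length P * B + 2 * B + 30"
    using f1 f2 f3 lw by linarith
  then show ?thesis using reach_mono[OF t] unfolding X_def Ys_def by simp
qed

lemma conv_sfx: "map conv (([5, 6] @ replicate m 5 @ cw 1) @ replicate m 5 @ cw 2) @ map conv (replicate m 5) @ map conv (cw 3)
   @ map conv (replicate m 5 @ [6]) = map bit_sym (enc_slp (sfx m))"
  by (simp add: conv_def cw_def sfx_def enc_slp_def enc_nat_def bit_sym_def)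


lemma accept_path:
  fixes P :: "slp_instr list"
  defines "X \<equiv> map bit_sym (enc_slp P)" and "L \<equiv> length (enc_slp P)" and "m \<equiv> length P"
  defines "B \<equiv> L + 4 * m + 16"
  shows "reach (0, 0, tp X) (200, int L - 1, tp (map bit_sym (enc_slp (P @ sfx m))))
     (L + 1 + 3 + (L + 3) + 4 * (3 * m * B + 2 * B + 30))"
proof -
  have lX: "length X = L" unfolding X_def L_def by simp
  have v: "reach (0, 0, tp X) (0, int L, tp X) L"
  proof -
    have "(vrun 0 (enc_slp P) = Some 0 \<longrightarrow> reach (0, int 0, tp X) (0, int (0 + length (enc_slp P)), tp X) (length (enc_slp P)))"
    proof -
      have z: "tp X (int (length (enc_slp P))) = 0" using tp_len[of X] unfolding X_def by simp
      show ?thesis using valid_run[of 0 "enc_slp P" "tp X" 0] z unfolding X_def by simp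
    qed
    then show ?thesis using vrun_enc0 unfolding L_def by simp
  qed
  have s: "reach (0, int L, tp X) (100, int L, tp X) 1"
  proof (rule reach_step')
    have "tp X (int L) = 0" using tp_len[of X] lX by simp
    then show "dl 0 (tp X (int L)) = (100, 0, 0)" by (simp add: dl_def)
    show "tp X = (tp X)(int L := 0)" using tp_len[of X] lX by (simp add: fun_upd_idem)
  qed simp_all
  have ch: "reach (100, int L, tp X) (17, int (L + 1), tp (X @ [5, 6])) 3"
  proof -
    have "reach (100 + 20 * 0, int (length X), tp X) (cnext 0, int (length X + length (cw 0)) - 1, tp (X @ cw 0)) (length (cw 0) + 1)"
      using chain_full[of 0 X] by simp
    moreover have "int (length X + length (cw 0)) - 1 = int (L + 1)" using lX by (simp add: cw_def)
    ultimately show ?thesis using lX by (simp add: cw_def cnext_def numeral_3_eq_3)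
  qed
  have nz: "\<forall>s\<in>set (X @ [5, 6]). s \<noteq> 0" unfolding X_def by (auto simp: bit_sym_def)
  have hm0: "reach (10 * 1 + 7, int (L + 1), tp (X @ [5, 6])) (10 * 1, 0, tp (X @ [5, 6])) (L + 1 + 2)"
    by (rule home[of 1 "X @ [5, 6]" "L + 1", OF _ _ nz]) (use lX in simp_all)
  have hm: "reach (17, int (L + 1), tp (X @ [5, 6])) (10, 0, tp (X @ [5, 6])) (L + 1 + 2)"
    using hm0 by simp
  define Y1 where "Y1 = [5, 6::nat]"
  define Y2 where "Y2 = Y1 @ replicate m 5 @ cw 1"
  define Y3 where "Y3 = Y2 @ replicate m 5 @ cw 2"
  define Y4 where "Y4 = Y3 @ replicate m 5 @ cw 3"
  have Ys: "\<forall>s\<in>set Y1. s = 5 \<or> s = 6" "\<forall>s\<in>set Y2. s = 5 \<or> s = 6" "\<forall>s\<in>set Y3. s = 5 \<or> s = 6" "\<forall>s\<in>set Y4. s = 5 \<or> s = 6"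
    unfolding Y1_def Y2_def Y3_def Y4_def using cw_set by auto
  have Yne: "Y1 \<noteq> []" "Y2 \<noteq> []" "Y3 \<noteq> []" "Y4 \<noteq> []" unfolding Y1_def Y2_def Y3_def Y4_def by auto
  have Yl: "length Y1 \<le> 3 * m + 14" "length Y2 \<le> 3 * m + 14" "length Y3 \<le> 3 * m + 14" "length Y4 \<le> 3 * m + 14"
    unfolding Y1_def Y2_def Y3_def Y4_def by (simp_all add: cw_def)
  have p1: "reach (10, 0, tp (X @ Y1)) (20, 0, tp (X @ Y2)) (3 * m * B + 2 * B + 30)"
    using phase_home[of 1 Y1 P] Ys Yne Yl unfolding X_def Y2_def B_def L_def m_def by simp
  have p2: "reach (20, 0, tp (X @ Y2)) (30, 0, tp (X @ Y3)) (3 * m * B + 2 * B + 30)"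
    using phase_home[of 2 Y2 P] Ys Yne Yl unfolding X_def Y3_def B_def L_def m_def by simp
  have p3: "reach (30, 0, tp (X @ Y3)) (40, 0, tp (X @ Y4)) (3 * m * B + 2 * B + 30)"
    using phase_home[of 3 Y3 P] Ys Yne Yl unfolding X_def Y4_def B_def L_def m_def by simp
  have p4: "reach (40, 0, tp (X @ Y4)) (200, int L - 1, tp (X @ map conv (Y4 @ replicate m 5 @ [6]))) (3 * m * B + 2 * B + 30)"
    using phase_final[of Y4 P] Ys Yne Yl unfolding X_def B_def L_def m_def by simp
  have eq: "X @ map conv (Y4 @ replicate m 5 @ [6]) = map bit_sym (enc_slp (P @ sfx m))"
  proof -
    have "map conv (Y4 @ replicate m 5 @ [6]) = map bit_sym (enc_slp (sfx m))"
      unfolding Y4_def Y3_def Y2_def Y1_def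
      by (simp add: conv_def cw_def sfx_def enc_slp_def enc_nat_def bit_sym_def)
    moreover have "enc_slp (P @ sfx m) = enc_slp P @ enc_slp (sfx m)" by (simp add: enc_slp_def)
    ultimately show ?thesis unfolding X_def by simp
  qed
  have t: "reach (0, 0, tp X) (200, int L - 1, tp (X @ map conv (Y4 @ replicate m 5 @ [6])))
    (L + 1 + 3 + (L + 1 + 2) + (3 * m * B + 2 * B + 30) + (3 * m * B + 2 * B + 30) + (3 * m * B + 2 * B + 30) + (3 * m * B + 2 * B + 30))"
    using reach_trans[OF reach_trans[OF reach_trans[OF reach_trans[OF reach_trans[OF reach_trans[OF reach_trans[OF v s] ch] hm] p1[unfolded Y1_def]] p2] p3] p4] .
  show ?thesis using reach_mono[OF t] unfolding eq by simp
qed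

lemma reject_path:
  assumes "vrun 0 x \<noteq> Some 0"
  shows "reach (0, 0, tp (map bit_sym x)) (200, 2, (((tp (map bit_sym x))(0 := 2))(1 := 2))(2 := 0)) (2 * length x + 6)"
proof -
  define X where "X = map bit_sym x"
  have "vrun 0 x \<noteq> Some 0 \<longrightarrow> (\<exists>h'. (int 0 \<le> h' \<or> (0 \<noteq> (0::nat) \<and> h' = int 0 - 1)) \<and> h' < int (0 + length x)
        \<and> reach (0, int 0, tp X) (5, h', tp X) (length x + 1))"
  proof -
    have z: "tp X (int (length x)) = 0" using tp_len[of X] unfolding X_def by simp
    show ?thesis using valid_run[of 0 x "tp X" 0] z unfolding X_def by simp
  qed
  then obtain h' where h: "0 \<le> h'" "h' < int (length x)" "reach (0, 0, tp X) (5, h', tp X) (length x + 1)"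
    using assms by auto
  obtain n where n: "h' = int n" using h(1) by (metis nonneg_eq_int)
  have nl: "n < length x" using h(2) n by simp
  have a: "reach (5, int n, tp X) (5, int n - int (Suc n), tp X) (Suc n)"
  proof (rule run_left[of "{s. s \<noteq> 0}"])
    show "\<And>s. s \<in> {s. s \<noteq> 0} \<Longrightarrow> dl 5 s = (5, s, - 1)" by (simp add: dl_def)
    show "\<forall>i<Suc n. tp X (int n - int i) \<in> {s. s \<noteq> 0}"
    proof (intro allI impI)
      fix i assume "i < Suc n"
      then have e: "int n - int i = int (n - i)" and l: "n - i < length X" using nl X_def by auto
      have "X ! (n - i) \<noteq> 0" using l unfolding X_def by (simp add: bit_sym_def)
      then show "tp X (int n - int i) \<in> {s. s \<noteq> 0}" unfolding e using tp_nth[OF l] by simp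
    qed
  qed simp
  have b: "reach (5, -1, tp X) (6, 0, tp X) 1"
  proof (rule reach_step')
    have z: "tp X (-1) = 0" by simp
    show "dl 5 (tp X (- 1)) = (6, 0, 1)" unfolding z by (simp add: dl_def)
    show "tp X = (tp X)(- 1 := 0)" using z by (simp add: fun_upd_idem)
  qed simp_all
  have c: "reach (6, 0, tp X) (7, 1, (tp X)(0 := 2)) 1"
    by (rule reach_step') (simp_all add: dl_def)
  have d: "reach (7, 1, (tp X)(0 := 2)) (8, 2, ((tp X)(0 := 2))(1 := 2)) 1"
    by (rule reach_step') (simp_all add: dl_def)
  have e: "reach (8, 2, ((tp X)(0 := 2))(1 := 2)) (200, 2, (((tp X)(0 := 2))(1 := 2))(2 := 0)) 1"
    by (rule reach_step') (simp_all add: dl_def)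
  have t: "reach (0, 0, tp X) (200, 2, (((tp X)(0 := 2))(1 := 2))(2 := 0)) (length x + 1 + Suc n + 1 + 1 + 1 + 1)"
    using reach_trans[OF reach_trans[OF reach_trans[OF reach_trans[OF reach_trans[OF h(3)[unfolded n] a[simplified]] b] c] d] e] .
  show ?thesis using reach_mono[OF t] nl unfolding X_def by simp
qed


lemma init_tp: "tm_init x = (0, 0, tp (map bit_sym x))"
  unfolding tm_init_def tp_def by (auto simp: fun_eq_iff)

lemma tape_holds_tp: "tape_holds (tp (map bit_sym y)) y"
proof -
  have "\<forall>i<length y. tp (map bit_sym y) (int i) = bit_sym (y ! i)" by simp
  moreover have "tp (map bit_sym y) (int (length y)) = 0" using tp_len[of "map bit_sym y"] by simp
  ultimately show ?thesis unfolding tape_holds_def by blast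
qed

lemma reach_computes: "reach (tm_init x) (200, h, t) T \<Longrightarrow> T \<le> T' \<Longrightarrow> tape_holds t y \<Longrightarrow>
  \<exists>n\<le>T'. (case (tm_step M0 ^^ n) (tm_init x) of (q, h, t) \<Rightarrow> q = tm_halt M0 \<and> tape_holds t y)"
proof -
  assume a: "reach (tm_init x) (200, h, t) T" "T \<le> T'" "tape_holds t y"
  obtain n where n: "n \<le> T" "(tm_step M0 ^^ n) (tm_init x) = (200, h, t)" using a(1) unfolding reach_def by blast
  have "n \<le> T'" using n(1) a(2) by simp
  moreover have "case (tm_step M0 ^^ n) (tm_init x) of (q, h, t) \<Rightarrow> q = tm_halt M0 \<and> tape_holds t y"
    unfolding n(2) using a(3) by (simp add: M0_def)
  ultimately show ?thesis by (intro exI[of _ n] conjI)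
qed

lemma time_acc:
  fixes L m :: nat
  assumes "4 * m \<le> L"
  shows "L + 1 + 3 + (L + 1 + 2) + 4 * (3 * m * (L + 4 * m + 16) + 2 * (L + 4 * m + 16) + 30) \<le> 400 * L ^ 2 + 400"
proof -
  define B where "B = L + 4 * m + 16"
  have Bb: "B \<le> 2 * L + 16" using assms B_def by simp
  have mL: "m \<le> L" using assms by simp
  have mB: "m * B \<le> L * (2 * L + 16)" using mL Bb by (rule mult_le_mono)
  have e1: "L * (2 * L + 16) = 2 * (L * L) + 16 * L" by (simp add: algebra_simps)
  have LL: "L \<le> L * L" by (rule le_square)
  have e2: "3 * m * B = 3 * (m * B)" by simp
  have e3: "L ^ 2 = L * L" by (simp add: power2_eq_square)
  have key: "m * B \<le> 2 * (L * L) + 16 * L" using mB e1 by simp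
  have lin: "\<And>a s. a \<le> 2 * s + 16 * L \<Longrightarrow> L \<le> s \<Longrightarrow> B \<le> 2 * L + 16 \<Longrightarrow>
     L + 1 + 3 + (L + 1 + 2) + 4 * (3 * a + 2 * B + 30) \<le> 400 * s + 400" by (simp add: algebra_simps)
  have "L + 1 + 3 + (L + 1 + 2) + 4 * (3 * m * B + 2 * B + 30) \<le> 400 * L ^ 2 + 400"
    unfolding e2 e3 using lin[OF key LL Bb] .
  then show ?thesis unfolding B_def .
qed

lemma poly_fred: "poly_time_computable fred"
  unfolding poly_time_computable_def
proof (intro exI conjI)
  show "valid_tm M0" by (rule valid_M0)
  show "computes_within M0 fred (\<lambda>n. 400 * n ^ 2 + 400)"
    unfolding computes_within_def
  proof
    fix x :: "bool list"
    show "\<exists>n\<le>400 * length x ^ 2 + 400. case (tm_step M0 ^^ n) (tm_init x) of (q, h, t) \<Rightarrow> q = tm_halt M0 \<and> tape_holds t (fred x)"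
    proof (cases "vrun 0 x = Some 0")
      case True
      then obtain P where x: "x = enc_slp P" using vrun_dec by blast
      then have d: "dec x = P" unfolding dec_def using enc_slp_inj by (metis (mono_tags) someI_ex)
      have f: "fred x = enc_slp (P @ sfx (length P))" unfolding fred_def using True d by simp
      have r: "reach (tm_init x) (200, int (length (enc_slp P)) - 1, tp (map bit_sym (enc_slp (P @ sfx (length P)))))
        (length (enc_slp P) + 1 + 3 + (length (enc_slp P) + 1 + 2) + 4 * (3 * length P * (length (enc_slp P) + 4 * length P + 16) + 2 * (length (enc_slp P) + 4 * length P + 16) + 30))"
        using accept_path[of P] unfolding init_tp x by simp
      have tb: "length (enc_slp P) + 1 + 3 + (length (enc_slp P) + 1 + 2) + 4 * (3 * length P * (length (enc_slp P) + 4 * length P + 16) + 2 * (length (enc_slp P) + 4 * length P + 16) + 30) \<le> 400 * length x ^ 2 + 400"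
        using time_acc[OF enc_len_ge[of P]] unfolding x .
      show ?thesis using reach_computes[OF r tb] tape_holds_tp unfolding f by blast
    next
      case False
      have f: "fred x = [True, True]" unfolding fred_def using False by simp
      have r: "reach (tm_init x) (200, 2, (((tp (map bit_sym x))(0 := 2))(1 := 2))(2 := 0)) (2 * length x + 6)"
        using reject_path[OF False] unfolding init_tp .
      have lin: "\<And>s. length x \<le> s \<Longrightarrow> 2 * length x + 6 \<le> 400 * s + 400" by linarith
      have tb: "2 * length x + 6 \<le> 400 * length x ^ 2 + 400"
        using lin[OF le_square[of "length x"]] by (simp add: power2_eq_square)
      have th: "tape_holds ((((tp (map bit_sym x))(0 := 2))(1 := 2))(2 := 0)) [True, True]"
        unfolding tape_holds_def
      proof (intro conjI allI impI)
        fix i assume "i < length [True, True]"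
        then have "i = 0 \<or> i = 1" by auto
        then show "((((tp (map bit_sym x))(0 := 2))(1 := 2))(2 := 0)) (int i) = bit_sym ([True, True] ! i)"
          by (auto simp: bit_sym_def)
      qed simp
      show ?thesis using reach_computes[OF r tb th] unfolding f .
    qed
  qed
qed

theorem mainTheorem9:
  shows "EquSLP \<le>\<^sub>P ThreeSoSSLP"
  unfolding poly_reduces_def using poly_fred fred_correct by blast


end
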